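(* Assume the Diagonal Conjecture (DC) holds: for every $r \ge 2$, all integers $3 \le s \le t$ and all integers $k_3,\dots,k_r \ge 2$, we have $R(s,t,k_3,\dots,k_r) \ge R(s-1,t+1,k_3,\dots,k_r)$. Then for every integer $k \ge 3$ and every integer $r \ge 1$, $$R_{2r}(k)-1 \ge (R_r(k-1)-1)(R_r(k+1)-1).$$
   Context: $R(k_1,\dots,k_r)$ denotes the multicolor Ramsey number: the least $n$ such that every coloring of the edges of $K_n$ with $r$ colors contains, for some $i$, a complete subgraph $K_{k_i}$ all of whose edges have color $i$. This number does not depend on the order of the arguments. $R_r(k)=R(k,\dots,k)$ with $r$ arguments equal to $k$. *)

theory Defs
  imports Main
begin

definition edge_colouring :: "nat \<Rightarrow> nat \<Rightarrow> (nat set \<Rightarrow> nat) \<Rightarrow> bool" where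
  "edge_colouring n r c \<longleftrightarrow> (\<forall>e. e \<subseteq> {..<n} \<and> card e = 2 \<longrightarrow> c e < r)"

definition mono_clique :: "(nat set \<Rightarrow> nat) \<Rightarrow> nat \<Rightarrow> nat set \<Rightarrow> bool" where
  "mono_clique c i S \<longleftrightarrow> (\<forall>e. e \<subseteq> S \<and> card e = 2 \<longrightarrow> c e = i)"

definition ramsey_arrow :: "nat \<Rightarrow> nat list \<Rightarrow> bool" where
  "ramsey_arrow n ks \<longleftrightarrow>
     (\<forall>c. edge_colouring n (length ks) c \<longrightarrow>
        (\<exists>i < length ks. \<exists>S. S \<subseteq> {..<n} \<and> card S = ks ! i \<and> mono_clique c i S))"

definition ramsey_num :: "nat list \<Rightarrow> nat" where
  "ramsey_num ks = (LEAST n. ramsey_arrow n ks)"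

definition ramsey_diag :: "nat \<Rightarrow> nat \<Rightarrow> nat" where
  "ramsey_diag r k = ramsey_num (replicate r k)"

end

theory Submission
  imports Defs "HOL-Library.Ramsey" "HOL-Combinatorics.List_Permutation"
begin

lemma arrow_mono:
  assumes "ramsey_arrow m ks" "m \<le> n" shows "ramsey_arrow n ks"
proof -
  have sub: "{..<m} \<subseteq> {..<n}" using assms(2) by auto
  show ?thesis unfolding ramsey_arrow_def
  proof (intro allI impI)
    fix c assume "edge_colouring n (length ks) c"
    then have "edge_colouring m (length ks) c" using sub
      unfolding edge_colouring_def by (meson subset_trans)
    then obtain i S where "i < length ks" "S \<subseteq> {..<m}" "card S = ks ! i" "mono_clique c i S"
      using assms(1) unfolding ramsey_arrow_def by blast
    moreover have "S \<subseteq> {..<n}" using \<open>S \<subseteq> {..<m}\<close> sub by (rule subset_trans)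
    ultimately show "\<exists>i<length ks. \<exists>S. S \<subseteq> {..<n} \<and> card S = ks ! i \<and> mono_clique c i S"
      by blast
  qed
qed

lemma arrow_exists: "\<exists>n. ramsey_arrow n ks"
proof -
  obtain N :: nat where N: "partn_lst {..<N} ks 2" using ramsey_full by blast
  have "ramsey_arrow N ks" unfolding ramsey_arrow_def
  proof (intro allI impI)
    fix c assume c: "edge_colouring N (length ks) c"
    have cP: "c \<in> nsets {..<N} 2 \<rightarrow> {..<length ks}"
    proof
      fix e assume "e \<in> nsets {..<N} 2"
      then have "e \<subseteq> {..<N} \<and> card e = 2" unfolding nsets_def by simp
      then show "c e \<in> {..<length ks}" using c unfolding edge_colouring_def by simp
    qed
    have "\<exists>i<length ks. monochromatic {..<N} (ks!i) 2 c i"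
      using N cP unfolding partn_lst_def by (rule bspec)
    then obtain i where i: "i < length ks" "monochromatic {..<N} (ks!i) 2 c i"
      by blast
    then obtain H where H: "H \<in> nsets {..<N} (ks!i)" "c ` (nsets H 2) \<subseteq> {i}"
      unfolding monochromatic_def by blast
    have "mono_clique c i H" unfolding mono_clique_def
    proof (intro allI impI)
      fix e assume e: "e \<subseteq> H \<and> card e = 2"
      then have "finite e" by (intro card_ge_0_finite) simp
      then have "e \<in> nsets H 2" unfolding nsets_def using e by simp
      then show "c e = i" using H(2) by blast
    qed
    then show "\<exists>i<length ks. \<exists>S. S \<subseteq> {..<N} \<and> card S = ks ! i \<and> mono_clique c i S"
      using i H(1) unfolding nsets_def by blast
  qed
  then show ?thesis by blast
qed

lemma arrow_num: "ramsey_arrow (ramsey_num ks) ks"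
  unfolding ramsey_num_def by (rule LeastI_ex, rule arrow_exists)

lemma arrow_iff: "ramsey_arrow n ks \<longleftrightarrow> ramsey_num ks \<le> n"
proof
  assume "ramsey_arrow n ks" then show "ramsey_num ks \<le> n"
    unfolding ramsey_num_def by (rule Least_le)
next
  assume "ramsey_num ks \<le> n" then show "ramsey_arrow n ks"
    by (rule arrow_mono[OF arrow_num])
qed

lemma arrow_perm:
  assumes "ramsey_arrow n xs" "mset xs = mset ys" shows "ramsey_arrow n ys"
proof -
  obtain f where f: "bij_betw f {..<length ys} {..<length xs}" "\<forall>j<length ys. ys ! j = xs ! (f j)"
    using permutation_Ex_bij[OF assms(2)[symmetric]] by blast
  show ?thesis unfolding ramsey_arrow_def
  proof (intro allI impI)
    fix c assume c: "edge_colouring n (length ys) c"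
    have "edge_colouring n (length xs) (\<lambda>e. f (c e))" unfolding edge_colouring_def
    proof (intro allI impI)
      fix e assume "e \<subseteq> {..<n} \<and> card e = 2"
      then have "c e < length ys" using c unfolding edge_colouring_def by blast
      then have "c e \<in> {..<length ys}" by simp
      then have "f (c e) \<in> {..<length xs}" by (rule bij_betw_apply[OF f(1)])
      then show "f (c e) < length xs" by simp
    qed
    then obtain i S where iS: "i < length xs" "S \<subseteq> {..<n}" "card S = xs ! i"
        "mono_clique (\<lambda>e. f (c e)) i S"
      using assms(1) unfolding ramsey_arrow_def by blast
    have "i \<in> f ` {..<length ys}" using bij_betw_imp_surj_on[OF f(1)] iS(1) by simp
    then obtain j where j: "j < length ys" "f j = i" by auto
    have "mono_clique c j S" unfolding mono_clique_def
    proof (intro allI impI)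
      fix e assume e: "e \<subseteq> S \<and> card e = 2"
      then have "f (c e) = f j" using iS(4) j(2) unfolding mono_clique_def by blast
      moreover have "e \<subseteq> {..<n}" using e iS(2) by (meson subset_trans)
      then have "c e < length ys" using c e unfolding edge_colouring_def by blast
      ultimately show "c e = j"
        using inj_onD[OF bij_betw_imp_inj_on[OF f(1)]] j(1) by simp
    qed
    moreover have "card S = ys ! j" using iS(3) j f(2) by metis
    ultimately show "\<exists>i<length ys. \<exists>S. S \<subseteq> {..<n} \<and> card S = ys ! i \<and> mono_clique c i S"
      using j(1) iS(2) by blast
  qed
qed

lemma num_perm: "mset xs = mset ys \<Longrightarrow> ramsey_num xs = ramsey_num ys"
proof -
  assume m: "mset xs = mset ys"
  have "ramsey_num ys \<le> ramsey_num xs"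
    using arrow_perm[OF arrow_num m] arrow_iff by blast
  moreover have "ramsey_num xs \<le> ramsey_num ys"
    using arrow_perm[OF arrow_num m[symmetric]] arrow_iff by blast
  ultimately show ?thesis by simp
qed


lemma not_arrow0:
  assumes "ks \<noteq> []" "\<forall>k\<in>set ks. 2 \<le> k" shows "\<not> ramsey_arrow 0 ks"
proof
  assume a: "ramsey_arrow 0 ks"
  have "edge_colouring 0 (length ks) (\<lambda>_. 0)"
    unfolding edge_colouring_def using assms(1) by simp
  then have "\<exists>i<length ks. \<exists>S. S \<subseteq> {..<0} \<and> card S = ks ! i \<and> mono_clique (\<lambda>_. 0) i S"
    by (rule a[unfolded ramsey_arrow_def, rule_format])
  then obtain i S where iS: "i < length ks" "S \<subseteq> {..<0}" "card S = ks ! i" "mono_clique (\<lambda>_. 0) i S"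
    by (elim exE conjE)
  have "ks ! i \<in> set ks" using iS(1) by (rule nth_mem)
  then have "ks ! i \<ge> 2" using assms(2) by blast
  moreover have "S = {}" using iS(2) by simp
  ultimately show False using iS(3) by simp
qed

lemma num_pos:
  assumes "ks \<noteq> []" "\<forall>k\<in>set ks. 2 \<le> k"
  shows "ramsey_num ks \<ge> 1" "\<not> ramsey_arrow (ramsey_num ks - 1) ks"
proof -
  have "\<not> ramsey_num ks \<le> 0" using not_arrow0[OF assms] arrow_iff[of 0 ks] by blast
  then show g: "ramsey_num ks \<ge> 1" by simp
  have "\<not> ramsey_num ks \<le> ramsey_num ks - 1" using g by simp
  then show "\<not> ramsey_arrow (ramsey_num ks - 1) ks" using arrow_iff[of "ramsey_num ks - 1" ks] by blast
qed

lemma inj_edge: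
  assumes "inj_on g S" "e' \<subseteq> g ` S" "card e' = 2"
  shows "\<exists>e. e \<subseteq> S \<and> card e = 2 \<and> g ` e = e'"
proof -
  define e where "e = S \<inter> g -` e'"
  have "g ` e = e'" using assms(2) unfolding e_def by auto
  moreover have "inj_on g e" using assms(1) unfolding e_def by (rule inj_on_subset) auto
  ultimately have "card e = 2" using assms(3) card_image by metis
  then show ?thesis using \<open>g ` e = e'\<close> unfolding e_def by blast
qed

lemma product:
  assumes n1: "\<not> ramsey_arrow A as" and n2: "\<not> ramsey_arrow B bs"
  shows "\<not> ramsey_arrow (A*B) (as@bs)"
proof
  assume arr: "ramsey_arrow (A*B) (as@bs)"
  obtain c1 where c1: "edge_colouring A (length as) c1"
    and nc1: "\<And>i S. i < length as \<Longrightarrow> S \<subseteq> {..<A} \<Longrightarrow> card S = as!i \<Longrightarrow> \<not> mono_clique c1 i S"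
    using n1 unfolding ramsey_arrow_def by blast
  obtain c2 where c2: "edge_colouring B (length bs) c2"
    and nc2: "\<And>i S. i < length bs \<Longrightarrow> S \<subseteq> {..<B} \<Longrightarrow> card S = bs!i \<Longrightarrow> \<not> mono_clique c2 i S"
    using n2 unfolding ramsey_arrow_def by blast
  define d where "d = (\<lambda>x::nat. x div B)"
  define md where "md = (\<lambda>x::nat. x mod B)"
  define c where "c = (\<lambda>e. if card (d ` e) = 2 then c1 (d ` e) else length as + c2 (md ` e))"
  have dlt: "d x < A" if "x < A*B" for x
    using that unfolding d_def by (simp add: less_mult_imp_div_less)
  have mdlt: "md x < B" if "x < A*B" for x
    using that unfolding md_def by (metis mod_less_divisor mult_0_right not_less_zero zero_less_iff_neq_zero)
  have eqv: "x = y" if "d x = d y" "md x = md y" for x y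
    using that unfolding d_def md_def by (metis div_mult_mod_eq)
  have dA: "d ` e \<subseteq> {..<A}" if "e \<subseteq> {..<A*B}" for e using that dlt by auto
  have mdB: "md ` e \<subseteq> {..<B}" if "e \<subseteq> {..<A*B}" for e using that mdlt by auto
  have c1lt: "c1 (d ` e) < length as" if "e \<subseteq> {..<A*B}" "card (d ` e) = 2" for e
  proof -
    have "d ` e \<subseteq> {..<A} \<and> card (d ` e) = 2" using dA[OF that(1)] that(2) by simp
    then show ?thesis using c1 unfolding edge_colouring_def by blast
  qed
  have cval: "c e = c1 (d ` e) \<and> c1 (d ` e) < length as \<or> (c e = length as + c2 (md ` e) \<and> c2 (md ` e) < length bs)"
    if ce: "e \<subseteq> {..<A*B}" "card e = 2" for e
  proof -
    obtain x y where xy: "e = {x, y}" "x \<noteq> y" using card_2_iff[THEN iffD1, OF ce(2)] by blast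
    show ?thesis
    proof (cases "d x = d y")
      case True
      then have "md x \<noteq> md y" using eqv xy(2) by blast
      then have "card (md ` e) = 2" using xy by simp
      then have "c2 (md ` e) < length bs" using c2 mdB[OF ce(1)] unfolding edge_colouring_def by blast
      moreover have "card (d ` e) \<noteq> 2" using True xy by simp
      ultimately show ?thesis unfolding c_def by simp
    next
      case False
      then have "card (d ` e) = 2" using xy by simp
      then show ?thesis unfolding c_def using c1lt[OF ce(1)] by simp
    qed
  qed
  have col: "edge_colouring (A*B) (length (as@bs)) c"
    unfolding edge_colouring_def
  proof (intro allI impI)
    fix e assume "e \<subseteq> {..<A*B} \<and> card e = 2"
    then have "c e = c1 (d ` e) \<and> c1 (d ` e) < length as \<or> (c e = length as + c2 (md ` e) \<and> c2 (md ` e) < length bs)"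
      using cval by blast
    then show "c e < length (as @ bs)" by auto
  qed
  then obtain i S where iS: "i < length (as@bs)" "S \<subseteq> {..<A*B}" "card S = (as@bs) ! i"
      "mono_clique c i S"
    using arr unfolding ramsey_arrow_def by blast
  have edgeS: "{x, y} \<subseteq> {..<A*B} \<and> card {x, y} = 2 \<and> c {x, y} = i" if "x \<in> S" "y \<in> S" "x \<noteq> y" for x y
    using that iS(2,4) unfolding mono_clique_def by auto
  show False
  proof (cases "i < length as")
    case True
    have inj: "inj_on d S"
    proof (rule inj_onI, rule ccontr)
      fix x y assume "x \<in> S" "y \<in> S" "d x = d y" "x \<noteq> y"
      then have "c {x,y} = i" "card (d ` {x,y}) \<noteq> 2" using edgeS by auto
      then show False using True unfolding c_def by simp
    qed
    have "mono_clique c1 i (d ` S)" unfolding mono_clique_def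
    proof (intro allI impI)
      fix e' assume e': "e' \<subseteq> d ` S \<and> card e' = 2"
      then obtain e where e: "e \<subseteq> S" "card e = 2" "d ` e = e'" using inj_edge[OF inj] by blast
      then have "c e = i" using iS(4) unfolding mono_clique_def by blast
      then show "c1 e' = i" using e e' unfolding c_def by simp
    qed
    moreover have "card (d ` S) = as ! i" using iS(3) True card_image[OF inj] by (simp add: nth_append)
    ultimately show False using nc1[OF True dA[OF iS(2)]] by blast
  next
    case False
    define j where "j = i - length as"
    have j: "j < length bs" "(as@bs) ! i = bs ! j" "i = length as + j"
      using False iS(1) unfolding j_def by (auto simp: nth_append)
    have same: "d x = d y" if "x \<in> S" "y \<in> S" for x y
    proof (rule ccontr)
      assume ne: "d x \<noteq> d y"
      then have "x \<noteq> y" by auto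
      then have h: "{x, y} \<subseteq> {..<A*B}" "c {x,y} = i" using edgeS that by auto
      have "card (d ` {x,y}) = 2" using ne by simp
      then show False using c1lt[OF h(1)] h(2) False unfolding c_def by simp
    qed
    have inj: "inj_on md S"
      by (rule inj_onI) (use same eqv in blast)
    have "mono_clique c2 j (md ` S)" unfolding mono_clique_def
    proof (intro allI impI)
      fix e' assume e': "e' \<subseteq> md ` S \<and> card e' = 2"
      then obtain e where e: "e \<subseteq> S" "card e = 2" "md ` e = e'" using inj_edge[OF inj] by blast
      then have "c e = i" using iS(4) unfolding mono_clique_def by blast
      moreover obtain x y where xy: "e = {x, y}" using card_2_iff[THEN iffD1, OF e(2)] by blast
      moreover have "d x = d y" using same e(1) xy by auto
      ultimately show "c2 e' = j" using e j(3) unfolding c_def by simp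
    qed
    moreover have "card (md ` S) = bs ! j" using iS(3) j card_image[OF inj] by simp
    ultimately show False using nc2[OF j(1) mdB[OF iS(2)]] by blast
  qed
qed

lemma chain:
  assumes DC: "\<forall>s t ks. 3 \<le> s \<and> s \<le> t \<and> (\<forall>k\<in>set ks. 2 \<le> k) \<longrightarrow>
      ramsey_num ((s - 1) # (t + 1) # ks) \<le> ramsey_num (s # t # ks)"
  assumes k: "(k::nat) \<ge> 3"
  shows "j \<le> r \<Longrightarrow> ramsey_num (concat (replicate j [k-1,k+1]) @ replicate (2*(r-j)) k)
           \<le> ramsey_num (replicate (2*r) k)"
proof (induction j)
  case 0 then show ?case by simp
next
  case (Suc j)
  define P where "P = concat (replicate j [k-1,k+1])"
  define Q where "Q = replicate (2*(r - Suc j)) k"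
  have "2*(r-j) = Suc (Suc (2*(r - Suc j)))" using Suc.prems by simp
  then have L: "concat (replicate j [k-1,k+1]) @ replicate (2*(r-j)) k = P @ k # k # Q"
    unfolding P_def Q_def by simp
  have L': "concat (replicate (Suc j) [k-1,k+1]) @ replicate (2*(r-Suc j)) k = (k-1) # (k+1) # (P @ Q)"
    unfolding P_def Q_def by simp
  have ge2: "\<forall>x\<in>set (P @ Q). 2 \<le> x" using k unfolding P_def Q_def by auto
  have "ramsey_num ((k-1) # (k+1) # (P @ Q)) \<le> ramsey_num (k # k # (P @ Q))"
    using DC k ge2 by blast
  also have "\<dots> = ramsey_num (P @ k # k # Q)" by (rule num_perm) simp
  also have "\<dots> \<le> ramsey_num (replicate (2*r) k)" using Suc L by simp
  finally show ?case using L' by simp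
qed

lemma mset_alt: "mset (concat (replicate r [a, b])) = mset (replicate r a @ replicate r b)"
  by (induction r) (auto simp: union_mset_add_mset_right)

theorem lemma1:
  assumes DC: "\<forall>s t ks. 3 \<le> s \<and> s \<le> t \<and> (\<forall>k\<in>set ks. 2 \<le> k) \<longrightarrow>
      ramsey_num ((s - 1) # (t + 1) # ks) \<le> ramsey_num (s # t # ks)"
  assumes "(k::nat) \<ge> 3" and "(r::nat) \<ge> 1"
  shows "int (ramsey_diag (2 * r) k) - 1 \<ge>
           (int (ramsey_diag r (k - 1)) - 1) * (int (ramsey_diag r (k + 1)) - 1)"
proof -
  define a where "a = replicate r (k-1)"
  define b where "b = replicate r (k+1)"
  define A where "A = ramsey_num a"
  define B where "B = ramsey_num b"
  have ne: "a \<noteq> []" "b \<noteq> []" using assms(3) unfolding a_def b_def by auto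
  have g2: "\<forall>x\<in>set a. 2 \<le> x" "\<forall>x\<in>set b. 2 \<le> x" using assms(2) unfolding a_def b_def by auto
  have A1: "A \<ge> 1" "\<not> ramsey_arrow (A - 1) a" using num_pos[OF ne(1) g2(1)] unfolding A_def by auto
  have B1: "B \<ge> 1" "\<not> ramsey_arrow (B - 1) b" using num_pos[OF ne(2) g2(2)] unfolding B_def by auto
  have "\<not> ramsey_arrow ((A-1)*(B-1)) (a@b)" by (rule product[OF A1(2) B1(2)])
  then have lt: "(A-1)*(B-1) < ramsey_num (a@b)" using arrow_iff by (meson not_le_imp_less)
  have "ramsey_num (a@b) = ramsey_num (concat (replicate r [k-1,k+1]) @ replicate (2*(r-r)) k)"
    by (rule num_perm) (simp add: mset_alt a_def b_def)
  also have "\<dots> \<le> ramsey_diag (2*r) k"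
    unfolding ramsey_diag_def by (rule chain[OF DC assms(2)]) simp
  finally have "(A-1)*(B-1) < ramsey_diag (2*r) k" using lt by simp
  then have "int ((A-1)*(B-1)) \<le> int (ramsey_diag (2*r) k) - 1" by linarith
  moreover have "int ((A-1)*(B-1)) = (int A - 1) * (int B - 1)" using A1(1) B1(1) by (simp add: of_nat_diff)
  ultimately show ?thesis unfolding A_def B_def a_def b_def ramsey_diag_def by simp
qed

end
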